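(* For $h\ge3$ the determinants satisfy $D_h-D_{h-1}+2z^3D_{h-2}-z^6D_{h-3}=0$. Moreover, with $z^3=t(1-t)^2$ and $W=\sqrt{4t-3t^2}$, for all $h\ge0$, \[ D_h=A r_1^h+Br_2^h+Cr_3^h, \] where $r_1=(t-1)^2$, $r_2=\tfrac t2(2-t+W)$, $r_3=\tfrac t2(2-t-W)$ are the roots of $X^3-X^2+2z^3X-z^6=0$, and \[ A=\frac{t-1}{3t-1},\qquad B=\frac{3t^2-4t-W}{(3t-1)(3t-4)},\qquad C=\frac{3t^2-4t+W}{(3t-1)(3t-4)}. \] (The identity holds as an identity of formal series in $t^{1/2}$, with $W=2t^{1/2}(1-3t/4)^{1/2}$.)
   Context: For $h\ge1$, $D_h=D_h(z)$ is the determinant of the $h\times h$ matrix $T_h$ (rows/columns indexed $0,\dots,h-1$) with entries $(T_h)_{p,p}=1$, $(T_h)_{p,p+1}=-2z$, $(T_h)_{p,p+2}=z^2$, $(T_h)_{p+1,p}=-z^2$, and all other entries $0$; $D_0=1$. (So $D_1=1$, $D_2=1-2z^3$.) *)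

theory Defs
  imports Complex_Main "Jordan_Normal_Form.Determinant"
begin

definition T_mat :: "nat \<Rightarrow> 'a::comm_ring_1 \<Rightarrow> 'a mat" where
  "T_mat h z = mat h h (\<lambda>(p, q).
      if q = p then 1
      else if q = p + 1 then - 2 * z
      else if q = p + 2 then z ^ 2
      else if p = q + 1 then - (z ^ 2)
      else 0)"

text \<open>D_h(z) = det T_h(z); for h = 0 this is the determinant of the empty matrix, i.e. 1.\<close>
definition D :: "nat \<Rightarrow> 'a::comm_ring_1 \<Rightarrow> 'a" where
  "D h z = (if h = 0 then 1 else det (T_mat h z))"

end

theory Submission
  imports Defs
begin

definition Fz :: "'a::comm_ring_1 \<Rightarrow> nat \<times> nat \<Rightarrow> 'a" where
  "Fz z = (\<lambda>(p, q).
      if q = p then 1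
      else if q = p + 1 then - 2 * z
      else if q = p + 2 then z ^ 2
      else if p = q + 1 then - (z ^ 2)
      else 0)"

lemma D_mat: "D h z = det (mat h h (Fz z))"
  unfolding D_def T_mat_def Fz_def by (cases "h = 0") auto

lemma mat_cong_dom:
  assumes "\<And>p q. p < k \<Longrightarrow> q < k \<Longrightarrow> f (p, q) = g (p, q)"
  shows "mat k k f = mat k k g"
  using assms by (intro eq_matI) auto

lemma det_row_exp:
  fixes g :: "nat \<times> nat \<Rightarrow> 'a::comm_ring_1"
  shows "det (mat (Suc k) (Suc k) g) =
    (\<Sum>j<Suc k. g (k, j) * ((-1) ^ (k + j) *
        det (mat k k (\<lambda>(p, q). g (p, if q < j then q else Suc q)))))"
proof -
  have "det (mat (Suc k) (Suc k) g) = (\<Sum>j<Suc k. mat (Suc k) (Suc k) g $$ (k, j) * cofactor (mat (Suc k) (Suc k) g) k j)"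
    by (rule laplace_expansion_row) auto
  also have "\<dots> = (\<Sum>j<Suc k. g (k, j) * ((-1) ^ (k + j) *
        det (mat k k (\<lambda>(p, q). g (p, if q < j then q else Suc q)))))"
  proof (rule sum.cong[OF refl])
    fix j assume j: "j \<in> {..<Suc k}"
    have "mat_delete (mat (Suc k) (Suc k) g) k j = mat k k (\<lambda>(p, q). g (p, if q < j then q else Suc q))"
      unfolding mat_delete_def using j by (intro eq_matI) auto
    thus "mat (Suc k) (Suc k) g $$ (k, j) * cofactor (mat (Suc k) (Suc k) g) k j =
      g (k, j) * ((-1) ^ (k + j) * det (mat k k (\<lambda>(p, q). g (p, if q < j then q else Suc q))))"
      unfolding cofactor_def using j by auto
  qed
  finally show ?thesis .
qed

lemma det_col_exp:
  fixes g :: "nat \<times> nat \<Rightarrow> 'a::comm_ring_1"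
  shows "det (mat (Suc k) (Suc k) g) =
    (\<Sum>i<Suc k. g (i, k) * ((-1) ^ (i + k) *
        det (mat k k (\<lambda>(p, q). g (if p < i then p else Suc p, q)))))"
proof -
  have "det (mat (Suc k) (Suc k) g) = (\<Sum>i<Suc k. mat (Suc k) (Suc k) g $$ (i, k) * cofactor (mat (Suc k) (Suc k) g) i k)"
    by (rule laplace_expansion_column) auto
  also have "\<dots> = (\<Sum>i<Suc k. g (i, k) * ((-1) ^ (i + k) *
        det (mat k k (\<lambda>(p, q). g (if p < i then p else Suc p, q)))))"
  proof (rule sum.cong[OF refl])
    fix i assume i: "i \<in> {..<Suc k}"
    have "mat_delete (mat (Suc k) (Suc k) g) i k = mat k k (\<lambda>(p, q). g (if p < i then p else Suc p, q))"
      unfolding mat_delete_def using i by (intro eq_matI) auto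
    thus "mat (Suc k) (Suc k) g $$ (i, k) * cofactor (mat (Suc k) (Suc k) g) i k =
      g (i, k) * ((-1) ^ (i + k) * det (mat k k (\<lambda>(p, q). g (if p < i then p else Suc p, q))))"
      unfolding cofactor_def using i by auto
  qed
  finally show ?thesis .
qed

lemma m1[simp]: "(-1::'a::comm_ring_1)^(n+n) = 1"
  by (rule neg_one_even_power) simp

lemma m1s[simp]: "(-1::'a::comm_ring_1)^(Suc (n+n)) = -1"
  by (rule neg_one_odd_power) simp

lemma D_rec:
  fixes z :: "'a::comm_ring_1"
  shows "D (n + 3) z = D (n + 2) z - 2 * z ^ 3 * D (n + 1) z + z ^ 6 * D n z"
proof -
  define G1 where "G1 = (\<lambda>(p, q). Fz z (p, if q < Suc n then q else Suc q))"
  define G11 where "G11 = (\<lambda>(p, q). G1 (p, if q < n then q else Suc q))"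
  have s1: "D (n + 3) z = - (- (z^2)) * det (mat (n+2) (n+2) G1) + D (n+2) z"
  proof -
    have "D (n + 3) z = det (mat (Suc (Suc (Suc n))) (Suc (Suc (Suc n))) (Fz z))"
      by (simp add: D_mat eval_nat_numeral)
    also have "\<dots> = (\<Sum>j<Suc (Suc (Suc n)). Fz z (Suc (Suc n), j) * ((-1) ^ (Suc (Suc n) + j) *
        det (mat (Suc (Suc n)) (Suc (Suc n)) (\<lambda>(p, q). Fz z (p, if q < j then q else Suc q)))))"
      by (rule det_row_exp)
    also have "\<dots> = Fz z (Suc (Suc n), Suc n) * ((-1) ^ (Suc (Suc n) + Suc n) *
        det (mat (Suc (Suc n)) (Suc (Suc n)) G1))
        + Fz z (Suc (Suc n), Suc (Suc n)) * ((-1) ^ (Suc (Suc n) + Suc (Suc n)) *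
        det (mat (Suc (Suc n)) (Suc (Suc n)) (\<lambda>(p, q). Fz z (p, if q < Suc (Suc n) then q else Suc q))))"
      unfolding G1_def
      by (simp add: sum.neutral Fz_def)
    also have "mat (Suc (Suc n)) (Suc (Suc n)) (\<lambda>(p, q). Fz z (p, if q < Suc (Suc n) then q else Suc q))
        = mat (Suc (Suc n)) (Suc (Suc n)) (Fz z)"
      by (rule mat_cong_dom) auto
    finally show ?thesis by (simp add: D_mat Fz_def eval_nat_numeral)
  qed
  have s2: "det (mat (n+2) (n+2) G1) = (-(z^2)) * (- det (mat (Suc n) (Suc n) G11)) + (- 2 * z) * D (n+1) z"
  proof -
    have "det (mat (n+2) (n+2) G1) = det (mat (Suc (Suc n)) (Suc (Suc n)) G1)"
      by (simp add: eval_nat_numeral)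
    also have "\<dots> = (\<Sum>j<Suc (Suc n). G1 (Suc n, j) * ((-1) ^ (Suc n + j) *
        det (mat (Suc n) (Suc n) (\<lambda>(p, q). G1 (p, if q < j then q else Suc q)))))"
      by (rule det_row_exp)
    also have "\<dots> = G1 (Suc n, n) * ((-1) ^ (Suc n + n) * det (mat (Suc n) (Suc n) G11))
       + G1 (Suc n, Suc n) * ((-1) ^ (Suc n + Suc n) *
        det (mat (Suc n) (Suc n) (\<lambda>(p, q). G1 (p, if q < Suc n then q else Suc q))))"
      unfolding G11_def
      by (simp add: sum.neutral G1_def Fz_def)
    also have "mat (Suc n) (Suc n) (\<lambda>(p, q). G1 (p, if q < Suc n then q else Suc q))
        = mat (Suc n) (Suc n) (Fz z)"
      by (rule mat_cong_dom) (auto simp: G1_def)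
    finally show ?thesis by (simp add: D_mat G1_def Fz_def eval_nat_numeral)
  qed
  have s3: "det (mat (Suc n) (Suc n) G11) = z^2 * D n z"
  proof -
    have "det (mat (Suc n) (Suc n) G11) = (\<Sum>i<Suc n. G11 (i, n) * ((-1) ^ (i + n) *
        det (mat n n (\<lambda>(p, q). G11 (if p < i then p else Suc p, q)))))"
      by (rule det_col_exp)
    also have "\<dots> = G11 (n, n) * ((-1) ^ (n + n) *
        det (mat n n (\<lambda>(p, q). G11 (if p < n then p else Suc p, q))))"
      by (simp add: sum.neutral G11_def G1_def Fz_def)
    also have "mat n n (\<lambda>(p, q). G11 (if p < n then p else Suc p, q)) = mat n n (Fz z)"
      by (rule mat_cong_dom) (auto simp: G11_def G1_def)
    finally show ?thesis by (simp add: D_mat G11_def G1_def Fz_def)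
  qed
  show ?thesis using s1 unfolding s2 s3 by (simp add: algebra_simps eval_nat_numeral)
qed


lemma D1: "D 1 z = 1"
  unfolding D_def T_mat_def by (simp add: det_row_exp[where k=0, simplified])

lemma D2: "D 2 (z::'a::comm_ring_1) = 1 - 2 * z^3"
proof -
  have "D 2 z = det (mat (Suc (Suc 0)) (Suc (Suc 0)) (Fz z))" by (simp add: D_mat eval_nat_numeral)
  also have "\<dots> = 1 - 2 * z^3"
    apply (subst det_row_exp)
    apply (simp add: det_row_exp[where k=0, simplified] Fz_def)
    apply (simp add: algebra_simps eval_nat_numeral)
    done
  finally show ?thesis .
qed

lemma comb: fixes d :: complex assumes "d \<noteq> 0"
  shows "(a/d*x + b/d*y + c/d*w = r) \<longleftrightarrow> (a*x+b*y+c*w = r*d)"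
proof -
  have "a/d*x + b/d*y + c/d*w = (a*x+b*y+c*w)/d" by (simp add: add_divide_distrib)
  thus ?thesis using assms by (simp add: divide_eq_eq)
qed

lemma init0: fixes t W r2 r3 :: complex
  shows "(t - 1) * (3 * t - 4) + (3 * t\<^sup>2 - 4 * t - W) + (3 * t\<^sup>2 - 4 * t + W) = (3 * t - 1) * (3 * t - 4)"
  by Groebner_Basis.algebra

lemma init1: fixes t W r2 r3 :: complex
  assumes "W^2 = 4*t-3*t^2" "2*r2 = t*(2-t+W)" "2*r3 = t*(2-t-W)" shows
 "((t - 1) * (3 * t - 4) * ((t - 1)\<^sup>2)) +
        (3 * t\<^sup>2 - 4 * t - W) * r2 +
        (3 * t\<^sup>2 - 4 * t + W) * r3 =
        ((3 * t - 1) * (3 * t - 4))"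
  using assms by Groebner_Basis.algebra

lemma init2: fixes t W r2 r3 :: complex
  assumes "W^2 = 4*t-3*t^2" "2*r2 = t*(2-t+W)" "2*r3 = t*(2-t-W)" shows
 "((t - 1) * (3 * t - 4) * ((t - 1)\<^sup>2)\<^sup>2) +
        (3 * t\<^sup>2 - 4 * t - W) * r2\<^sup>2 +
        (3 * t\<^sup>2 - 4 * t + W) * r3\<^sup>2 =
        ((1 - 2 * (t * (1 - t)\<^sup>2)) * ((3 * t - 1) * (3 * t - 4)))"
  using assms by Groebner_Basis.algebra

lemma rootW: fixes t W r z3 :: complex
  assumes "W^2 = 4*t-3*t^2" "2*r = t*(2-t+W)" "z3 = t*(1-t)^2"
  shows "r^3 - r^2 + 2*z3*r - z3^2 = 0"
  using assms by Groebner_Basis.algebra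

lemma rootW': fixes t W r z3 :: complex
  assumes "W^2 = 4*t-3*t^2" "2*r = t*(2-t-W)" "z3 = t*(1-t)^2"
  shows "r^3 - r^2 + 2*z3*r - z3^2 = 0"
  using assms by Groebner_Basis.algebra

lemma root1: fixes t z3 :: complex
  assumes "z3 = t*(1-t)^2"
  shows "((t-1)^2)^3 - ((t-1)^2)^2 + 2*z3*(t-1)^2 - z3^2 = 0"
  using assms by Groebner_Basis.algebra

lemma closed_form:
  fixes A B C r1 r2 r3 z :: complex
  assumes roots: "\<forall>r \<in> {r1, r2, r3}. r ^ 3 - r ^ 2 + 2 * z ^ 3 * r - z ^ 6 = 0"
    and i0: "A + B + C = 1" and i1: "A * r1 + B * r2 + C * r3 = 1"
    and i2: "A * r1^2 + B * r2^2 + C * r3^2 = 1 - 2 * z^3"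
  shows "D h z = A * r1 ^ h + B * r2 ^ h + C * r3 ^ h"
proof (induction h rule: less_induct)
  case (less h)
  have rec: "r ^ (n+3) = r^(n+2) - 2 * z^3 * r^(n+1) + z^6 * r^n" if "r \<in> {r1,r2,r3}" for r n
  proof -
    have "r ^ 3 - r ^ 2 + 2 * z ^ 3 * r - z ^ 6 = 0" using roots that by blast
    hence "r^n * (r ^ 3 - r ^ 2 + 2 * z ^ 3 * r - z ^ 6) = 0" by simp
    thus ?thesis by (simp add: algebra_simps power_add eval_nat_numeral)
  qed
  show ?case
  proof (cases "h < 3")
    case True
    then consider "h = 0" | "h = 1" | "h = 2" by linarith
    then show ?thesis
      by cases (use i0 i1 i2 D1 D2 in \<open>auto simp: D_def\<close>)
  next
    case False
    then obtain n where h: "h = n + 3" by (metis add.commute le_Suc_ex not_less)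
    have "D h z = D (n + 2) z - 2 * z ^ 3 * D (n + 1) z + z ^ 6 * D n z"
      using h D_rec by simp
    also have "\<dots> = A * (r1^(n+2) - 2*z^3*r1^(n+1) + z^6*r1^n) + B * (r2^(n+2) - 2*z^3*r2^(n+1) + z^6*r2^n)
        + C * (r3^(n+2) - 2*z^3*r3^(n+1) + z^6*r3^n)"
      unfolding less.IH[of "n+2", OF _] less.IH[of "n+1", OF _] less.IH[of n, OF _]
      using h by (simp only: less.IH h) (simp add: algebra_simps)
    also have "\<dots> = A * r1 ^ h + B * r2 ^ h + C * r3 ^ h"
    proof -
      have e1: "r1^(n+3) = r1^(n+2) - 2 * z^3 * r1^(n+1) + z^6 * r1^n" by (rule rec) simp
      have e2: "r2^(n+3) = r2^(n+2) - 2 * z^3 * r2^(n+1) + z^6 * r2^n" by (rule rec) simp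
      have e3: "r3^(n+3) = r3^(n+2) - 2 * z^3 * r3^(n+1) + z^6 * r3^n" by (rule rec) simp
      show ?thesis unfolding h e1 e2 e3 ..
    qed
    finally show ?thesis .
  qed
qed

theorem mainTheorem3:
  shows "(\<forall>(z::complex) h. h \<ge> 3 \<longrightarrow>
            D h z - D (h - 1) z + 2 * z ^ 3 * D (h - 2) z - z ^ 6 * D (h - 3) z = 0)
    \<and> (\<forall>(t::complex) (W::complex) (z::complex).
          z ^ 3 = t * (1 - t) ^ 2 \<longrightarrow> W ^ 2 = 4 * t - 3 * t ^ 2 \<longrightarrow>
          3 * t \<noteq> 1 \<longrightarrow> 3 * t \<noteq> 4 \<longrightarrow>
          (let r1 = (t - 1) ^ 2;
               r2 = t / 2 * (2 - t + W);
               r3 = t / 2 * (2 - t - W);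
               A = (t - 1) / (3 * t - 1);
               B = (3 * t ^ 2 - 4 * t - W) / ((3 * t - 1) * (3 * t - 4));
               C = (3 * t ^ 2 - 4 * t + W) / ((3 * t - 1) * (3 * t - 4))
           in (\<forall>r \<in> {r1, r2, r3}. r ^ 3 - r ^ 2 + 2 * z ^ 3 * r - z ^ 6 = 0)
              \<and> (\<forall>h. D h z = A * r1 ^ h + B * r2 ^ h + C * r3 ^ h)))"
proof (intro conjI allI impI)
  fix z :: complex and h :: nat assume "h \<ge> 3"
  then obtain n where h: "h = n + 3" by (metis add.commute le_Suc_ex)
  show "D h z - D (h - 1) z + 2 * z ^ 3 * D (h - 2) z - z ^ 6 * D (h - 3) z = 0"
    unfolding h using D_rec[of n z] by (simp add: eval_nat_numeral)
next
  fix t W z :: complex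
  assume hz: "z ^ 3 = t * (1 - t) ^ 2" and hW: "W ^ 2 = 4 * t - 3 * t ^ 2"
    and t1: "3 * t \<noteq> 1" and t4: "3 * t \<noteq> 4"
  define r1 where "r1 = (t - 1) ^ 2"
  define r2 where "r2 = t / 2 * (2 - t + W)"
  define r3 where "r3 = t / 2 * (2 - t - W)"
  define d where "d = (3 * t - 1) * (3 * t - 4)"
  have d0: "d \<noteq> 0" using t1 t4 unfolding d_def by auto
  have a0: "3 * t - 1 \<noteq> 0" using t1 by auto
  have eA: "(t - 1) / (3 * t - 1) = (t-1)*(3*t-4) / d" unfolding d_def using t4 by simp
  have h2: "2*r2 = t*(2-t+W)" "2*r3 = t*(2-t-W)" unfolding r2_def r3_def by simp_all
  have "z^6 = (z^3)^2" by (simp flip: power_mult)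
  hence z6: "z^6 = (t * (1 - t) ^ 2)^2" using hz by simp
  have roots: "\<forall>r \<in> {r1, r2, r3}. r ^ 3 - r ^ 2 + 2 * z ^ 3 * r - z ^ 6 = 0"
    using rootW[OF hW h2(1) refl] rootW'[OF hW h2(2) refl] root1[OF refl, of t]
    unfolding z6 hz r1_def by simp
  let ?A = "(t - 1) / (3 * t - 1)"
  let ?B = "(3 * t ^ 2 - 4 * t - W) / d"
  let ?C = "(3 * t ^ 2 - 4 * t + W) / d"
  have i0: "?A + ?B + ?C = 1"
    using comb[OF d0, of "(t-1)*(3*t-4)" 1 "3 * t ^ 2 - 4 * t - W" 1 "3 * t ^ 2 - 4 * t + W" 1 1]
      init0[of t W] unfolding eA d_def by simp
  have i1: "?A * r1 + ?B * r2 + ?C * r3 = 1"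
    using comb[OF d0, of "(t-1)*(3*t-4)" r1 "3 * t ^ 2 - 4 * t - W" r2 "3 * t ^ 2 - 4 * t + W" r3 1]
      init1[OF hW h2] unfolding eA d_def r1_def by simp
  have i2: "?A * r1^2 + ?B * r2^2 + ?C * r3^2 = 1 - 2 * z^3"
    using comb[OF d0, of "(t-1)*(3*t-4)" "r1^2" "3 * t ^ 2 - 4 * t - W" "r2^2" "3 * t ^ 2 - 4 * t + W" "r3^2" "1 - 2 * z^3"]
      init2[OF hW h2, folded hz r1_def d_def] unfolding eA by blast
  show "let r1 = (t - 1) ^ 2;
               r2 = t / 2 * (2 - t + W);
               r3 = t / 2 * (2 - t - W);
               A = (t - 1) / (3 * t - 1);
               B = (3 * t ^ 2 - 4 * t - W) / ((3 * t - 1) * (3 * t - 4));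
               C = (3 * t ^ 2 - 4 * t + W) / ((3 * t - 1) * (3 * t - 4))
           in (\<forall>r \<in> {r1, r2, r3}. r ^ 3 - r ^ 2 + 2 * z ^ 3 * r - z ^ 6 = 0)
              \<and> (\<forall>h. D h z = A * r1 ^ h + B * r2 ^ h + C * r3 ^ h)"
    unfolding Let_def
    using roots closed_form[OF roots i0 i1 i2]
    unfolding r1_def r2_def r3_def d_def by simp
qed

end
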